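(* For every $n\ge 2$, the tropicalization of the Cayley-Menger variety of $n$ points in $\mathbb{R}^1$ is the set of ultrametrics on $[n]$: $\mathrm{trop}(\mathrm{CM}_n^1)=U_n$.
   Context: Coordinates of $\mathbb{C}^{\binom{[n]}{2}}$ are indexed by pairs $uv$, $u<v$. $\mathrm{CM}_n^1\subseteq\mathbb{C}^{\binom{[n]}{2}}$ is the Zariski closure of $\{((x_u-x_v)^2)_{u<v}: x_1,\dots,x_n\in\mathbb{R}\}$. Tropicalization uses the max convention: with $K=\mathbb{C}\{\!\{t\}\!\}$ the complex Puiseux series field and $\mathrm{val}(a)=-(\text{smallest exponent of }t\text{ in }a)$, for $X\subseteq\mathbb{C}^S$ with ideal $I$, $\mathrm{trop}(X)$ is the Euclidean closure of $\{(\mathrm{val}(x_i))_{i}: x\in V_K(I)\}\cap\mathbb{R}^S$. $\delta\in\mathbb{R}^{\binom{[n]}{2}}$ is an ultrametric if $\delta_{uv}\le\max\{\delta_{uw},\delta_{vw}\}$ for all distinct $u,v,w\in[n]$ (no nonnegativity required); $U_n$ is the set of ultrametrics. *)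

theory Defs
  imports "HOL-Analysis.Analysis" "HOL-Library.Poly_Mapping"
    "HOL-Computational_Algebra.Formal_Laurent_Series"
begin

definition pairs :: "nat \<Rightarrow> (nat \<times> nat) set" where
  "pairs n = {(u, v). 1 \<le> u \<and> u < v \<and> v \<le> n}"

type_synonym 'v cpoly = "('v \<Rightarrow>\<^sub>0 nat) \<Rightarrow>\<^sub>0 complex"

definition poly_vars :: "'v cpoly \<Rightarrow> 'v set" where
  "poly_vars p = \<Union> (Poly_Mapping.keys ` Poly_Mapping.keys p)"

definition poly_eval :: "(complex \<Rightarrow> 'b::comm_ring_1) \<Rightarrow> 'v cpoly \<Rightarrow> ('v \<Rightarrow> 'b) \<Rightarrow> 'b" where
  "poly_eval emb p x = (\<Sum>m\<in>Poly_Mapping.keys p. emb (Poly_Mapping.lookup p m) * (\<Prod>v\<in>Poly_Mapping.keys m. x v ^ Poly_Mapping.lookup m v))"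

text \<open>The vanishing ideal of CM_n^1 (the ideal of its Zariski closure in
  C[x_uv : uv in pairs n]): polynomials in the variables x_uv vanishing on
  all points ((a_u - a_v)^2)_{u<v}, a real.\<close>
definition CM_ideal :: "nat \<Rightarrow> (nat \<times> nat) cpoly set" where
  "CM_ideal n = {p. poly_vars p \<subseteq> pairs n \<and>
     (\<forall>a :: nat \<Rightarrow> real. poly_eval id p
         (\<lambda>(u, v). complex_of_real ((a u - a v)^2)) = 0)}"

text \<open>Tropicalization (max convention) over the Puiseux series field
  K = \<Union>_N C((t^(1/N))). A point of K^S is written as x_i = f_i(t^(1/N)) with
  f_i in C((s)) (Laurent series) for a common N \<ge> 1; the substitution s = t^(1/N)
  is an injective ring homomorphism, so x \<in> V_K(I) iff all p \<in> I vanish at f in C((s)),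
  and val(x_i) = - subdegree(f_i) / N. The requirement val(x) \<in> R^S means all
  coordinates are nonzero. Vectors in R^S are functions vanishing outside S; the
  closure is taken in the product topology, which on such functions is the
  Euclidean topology of R^S.\<close>
definition trop_val_points :: "(nat \<times> nat) set \<Rightarrow> (nat \<times> nat) cpoly set \<Rightarrow> ((nat \<times> nat) \<Rightarrow> real) set" where
  "trop_val_points S I =
     {\<lambda>i. if i \<in> S then - (real_of_int (fls_subdegree (f i)) / real N) else 0 |
        N f. N \<ge> 1 \<and> (\<forall>i\<in>S. f i \<noteq> (0 :: complex fls)) \<and>
             (\<forall>p\<in>I. poly_eval fls_const p f = 0)}"

definition trop :: "(nat \<times> nat) set \<Rightarrow> (nat \<times> nat) cpoly set \<Rightarrow> ((nat \<times> nat) \<Rightarrow> real) set" where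
  "trop S I = closure (trop_val_points S I)"

definition dsym :: "((nat \<times> nat) \<Rightarrow> real) \<Rightarrow> nat \<Rightarrow> nat \<Rightarrow> real" where
  "dsym \<delta> u v = \<delta> (min u v, max u v)"

definition ultrametrics :: "nat \<Rightarrow> ((nat \<times> nat) \<Rightarrow> real) set" where
  "ultrametrics n = {\<delta>. (\<forall>i. i \<notin> pairs n \<longrightarrow> \<delta> i = 0) \<and>
     (\<forall>u\<in>{1..n}. \<forall>v\<in>{1..n}. \<forall>w\<in>{1..n}. u \<noteq> v \<and> u \<noteq> w \<and> v \<noteq> w \<longrightarrow>
        dsym \<delta> u v \<le> max (dsym \<delta> u w) (dsym \<delta> v w))}"

end

theory Submission
  imports Defs
begin

definition mon :: "('v \<Rightarrow>\<^sub>0 nat) \<Rightarrow> ('v \<Rightarrow> 'b::comm_ring_1) \<Rightarrow> 'b" where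
  "mon m x = (\<Prod>v\<in>Poly_Mapping.keys m. x v ^ Poly_Mapping.lookup m v)"

lemma poly_eval_mon: "poly_eval emb p x = (\<Sum>m\<in>Poly_Mapping.keys p. emb (Poly_Mapping.lookup p m) * mon m x)"
  by (simp add: poly_eval_def mon_def)

lemma mon_superset:
  assumes "finite S" "Poly_Mapping.keys m \<subseteq> S"
  shows "mon m x = (\<Prod>v\<in>S. x v ^ Poly_Mapping.lookup m v)"
  unfolding mon_def
  by (rule prod.mono_neutral_left[OF assms(1,2)]) (simp add: in_keys_iff)

lemma poly_eval_superset:
  assumes "finite M" "Poly_Mapping.keys p \<subseteq> M" "emb 0 = 0"
  shows "poly_eval emb p x = (\<Sum>m\<in>M. emb (Poly_Mapping.lookup p m) * mon m x)"
  unfolding poly_eval_mon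
  by (rule sum.mono_neutral_left[OF assms(1,2)]) (simp add: in_keys_iff assms(3))

lemma poly_eval_add:
  assumes "emb 0 = 0" "\<And>a b. emb (a + b) = emb a + emb b"
  shows "poly_eval emb (p + q) x = poly_eval emb p x + poly_eval emb q x"
proof -
  let ?M = "Poly_Mapping.keys p \<union> Poly_Mapping.keys q"
  have f: "finite ?M" by simp
  have kpq: "Poly_Mapping.keys (p+q) \<subseteq> ?M" by (rule keys_add)
  have kp: "Poly_Mapping.keys p \<subseteq> ?M" and kq: "Poly_Mapping.keys q \<subseteq> ?M" by auto
  have "poly_eval emb (p + q) x = (\<Sum>m\<in>?M. emb (Poly_Mapping.lookup (p+q) m) * mon m x)"
    by (rule poly_eval_superset[where emb=emb, OF f kpq assms(1)])
  also have "\<dots> = (\<Sum>m\<in>?M. emb (Poly_Mapping.lookup p m) * mon m x) + (\<Sum>m\<in>?M. emb (Poly_Mapping.lookup q m) * mon m x)"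
    by (simp add: lookup_add assms(2) distrib_right sum.distrib)
  also have "\<dots> = poly_eval emb p x + poly_eval emb q x"
    using poly_eval_superset[where emb=emb, OF f kp assms(1), of x] poly_eval_superset[where emb=emb, OF f kq assms(1), of x] by simp
  finally show ?thesis .
qed

lemma poly_eval_single:
  assumes "emb 0 = 0"
  shows "poly_eval emb (Poly_Mapping.single m c) x = emb c * mon m x"
  by (subst poly_eval_superset[of "{m}"]) (auto simp: assms)

lemma hom_sum:
  assumes "\<phi> 0 = 0" "\<And>a b. \<phi> (a + b) = \<phi> a + \<phi> b"
  shows "\<phi> (sum g A) = (\<Sum>a\<in>A. \<phi> (g a))"
proof (cases "finite A")
  case True then show ?thesis by (induction A rule: finite_induct) (auto simp: assms)
qed (simp add: assms)

lemma hom_prod: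
  assumes "\<phi> 1 = 1" "\<And>a b. \<phi> (a * b) = \<phi> a * \<phi> b"
  shows "\<phi> (prod g A) = (\<Prod>a\<in>A. \<phi> (g a))"
proof (cases "finite A")
  case True then show ?thesis by (induction A rule: finite_induct) (auto simp: assms)
qed (simp add: assms)

lemma hom_power:
  assumes "\<phi> 1 = 1" "\<And>a b. \<phi> (a * b) = \<phi> a * \<phi> b"
  shows "\<phi> (a ^ k) = \<phi> a ^ k"
  by (induction k) (auto simp: assms)

lemma poly_eval_hom:
  fixes \<phi> :: "'a::comm_ring_1 \<Rightarrow> 'b::comm_ring_1"
  assumes "\<phi> 0 = 0" "\<phi> 1 = 1" "\<And>a b. \<phi> (a + b) = \<phi> a + \<phi> b" "\<And>a b. \<phi> (a * b) = \<phi> a * \<phi> b"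
  shows "\<phi> (poly_eval emb p x) = poly_eval (\<phi> \<circ> emb) p (\<phi> \<circ> x)"
  unfolding poly_eval_def
  by (simp add: hom_sum[of \<phi>, OF assms(1,3)] hom_prod[of \<phi>, OF assms(2,4)] hom_power[of \<phi>, OF assms(2,4)] assms(4))


definition tri :: "'v \<Rightarrow> 'v \<Rightarrow> 'v \<Rightarrow> 'v cpoly" where
  "tri A B C =
     Poly_Mapping.single (Poly_Mapping.single A 2) 1 + Poly_Mapping.single (Poly_Mapping.single B 2) 1 +
     Poly_Mapping.single (Poly_Mapping.single C 2) 1 +
     Poly_Mapping.single (Poly_Mapping.single A 1 + Poly_Mapping.single B 1) (-2) +
     Poly_Mapping.single (Poly_Mapping.single A 1 + Poly_Mapping.single C 1) (-2) +
     Poly_Mapping.single (Poly_Mapping.single B 1 + Poly_Mapping.single C 1) (-2)"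

lemma mon_sq: "mon (Poly_Mapping.single A 2) x = x A ^ 2"
  by (subst mon_superset[of "{A}"]) auto

lemma mon_pair:
  assumes "A \<noteq> B"
  shows "mon (Poly_Mapping.single A 1 + Poly_Mapping.single B 1) x = x A * x B"
proof -
  have k: "Poly_Mapping.keys (Poly_Mapping.single A (1::nat) + Poly_Mapping.single B 1) \<subseteq> {A, B}"
    using keys_add[of "Poly_Mapping.single A (1::nat)" "Poly_Mapping.single B 1"] by auto
  show ?thesis
    by (subst mon_superset[OF _ k]) (use assms in \<open>auto simp: lookup_add lookup_single when_def\<close>)
qed

lemma poly_eval_tri:
  assumes "emb 0 = 0" "\<And>a b. emb (a + b) = emb a + emb b" "A \<noteq> B" "A \<noteq> C" "B \<noteq> C"
  shows "poly_eval emb (tri A B C) x =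
    emb 1 * x A ^ 2 + emb 1 * x B ^ 2 + emb 1 * x C ^ 2 + emb (-2) * (x A * x B)
    + emb (-2) * (x A * x C) + emb (-2) * (x B * x C)"
  unfolding tri_def
  by (simp only: poly_eval_add[where emb=emb, OF assms(1,2)] poly_eval_single[where emb=emb, OF assms(1)]
      mon_sq mon_pair[OF assms(3)] mon_pair[OF assms(4)] mon_pair[OF assms(5)])

lemma poly_vars_add: "poly_vars (p + q) \<subseteq> poly_vars p \<union> poly_vars q"
  unfolding poly_vars_def using keys_add[of p q] by auto

lemma poly_vars_single: "poly_vars (Poly_Mapping.single m c) \<subseteq> Poly_Mapping.keys m"
  unfolding poly_vars_def by auto

lemma poly_vars_tri: "poly_vars (tri A B C) \<subseteq> {A, B, C}"
proof -
  have s2: "poly_vars (Poly_Mapping.single (Poly_Mapping.single X 2) c) \<subseteq> {A,B,C}" if "X \<in> {A,B,C}" for X c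
    using poly_vars_single[of "Poly_Mapping.single X 2" c] that by auto
  have s1: "poly_vars (Poly_Mapping.single (Poly_Mapping.single X 1 + Poly_Mapping.single Y 1) c) \<subseteq> {A,B,C}"
    if "X \<in> {A,B,C}" "Y \<in> {A,B,C}" for X Y c
    using poly_vars_single[of "Poly_Mapping.single X 1 + Poly_Mapping.single Y 1" c]
      keys_add[of "Poly_Mapping.single X (1::nat)" "Poly_Mapping.single Y 1"] that by auto
  have ad: "poly_vars (p + q) \<subseteq> {A,B,C}" if "poly_vars p \<subseteq> {A,B,C}" "poly_vars q \<subseteq> {A,B,C}" for p q :: "'a cpoly"
    using poly_vars_add[of p q] that by blast
  show ?thesis unfolding tri_def
    by (intro ad s1 s2) auto
qed

lemma tri_real_zero:
  fixes a :: "nat \<Rightarrow> real"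
  shows "(1::complex) * (of_real ((a u - a v)^2)) ^ 2 + 1 * (of_real ((a u - a w)^2)) ^ 2
      + 1 * (of_real ((a v - a w)^2)) ^ 2 + (-2) * (of_real ((a u - a v)^2) * of_real ((a u - a w)^2))
      + (-2) * (of_real ((a u - a v)^2) * of_real ((a v - a w)^2))
      + (-2) * (of_real ((a u - a w)^2) * of_real ((a v - a w)^2)) = 0"
proof -
  have "((a u - a v)^2) ^ 2 + ((a u - a w)^2) ^ 2
      + ((a v - a w)^2) ^ 2 + (-2) * (((a u - a v)^2) * ((a u - a w)^2))
      + (-2) * (((a u - a v)^2) * ((a v - a w)^2))
      + (-2) * (((a u - a w)^2) * ((a v - a w)^2)) = 0"
    by (simp add: power2_eq_square algebra_simps)
  then have "complex_of_real (((a u - a v)^2) ^ 2 + ((a u - a w)^2) ^ 2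
      + ((a v - a w)^2) ^ 2 + (-2) * (((a u - a v)^2) * ((a u - a w)^2))
      + (-2) * (((a u - a v)^2) * ((a v - a w)^2))
      + (-2) * (((a u - a w)^2) * ((a v - a w)^2))) = 0" by (simp only: of_real_0)
  then show ?thesis by (simp only: of_real_add of_real_mult of_real_power of_real_minus of_real_numeral mult_1_left)
qed

lemma sq_sym: "(a (min u v) - a (max u v))^2 = ((a u - a v)^2 :: real)"
  by (cases "u \<le> v") (auto simp: min_def max_def power2_commute)

lemma tri_in_CM:
  assumes "u \<in> {1..n}" "v \<in> {1..n}" "w \<in> {1..n}" "u \<noteq> v" "u \<noteq> w" "v \<noteq> w"
  shows "tri (min u v, max u v) (min u w, max u w) (min v w, max v w) \<in> CM_ideal n"
proof -
  let ?A = "(min u v, max u v)" and ?B = "(min u w, max u w)" and ?C = "(min v w, max v w)"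
  have d: "?A \<noteq> ?B" "?A \<noteq> ?C" "?B \<noteq> ?C" using assms unfolding prod.inject min_def max_def by auto
  have p: "{?A, ?B, ?C} \<subseteq> pairs n" using assms by (auto simp: pairs_def min_def max_def)
  have "poly_vars (tri ?A ?B ?C) \<subseteq> pairs n" by (rule order.trans[OF poly_vars_tri p])
  moreover have "poly_eval id (tri ?A ?B ?C) (\<lambda>(u, v). complex_of_real ((a u - a v)^2)) = 0" for a :: "nat \<Rightarrow> real"
  proof -
    have e: "poly_eval id (tri ?A ?B ?C) (\<lambda>(u, v). complex_of_real ((a u - a v)^2)) =
      id 1 * ((\<lambda>(u, v). complex_of_real ((a u - a v)^2)) ?A) ^ 2
      + id 1 * ((\<lambda>(u, v). complex_of_real ((a u - a v)^2)) ?B) ^ 2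
      + id 1 * ((\<lambda>(u, v). complex_of_real ((a u - a v)^2)) ?C) ^ 2
      + id (-2) * ((\<lambda>(u, v). complex_of_real ((a u - a v)^2)) ?A * (\<lambda>(u, v). complex_of_real ((a u - a v)^2)) ?B)
      + id (-2) * ((\<lambda>(u, v). complex_of_real ((a u - a v)^2)) ?A * (\<lambda>(u, v). complex_of_real ((a u - a v)^2)) ?C)
      + id (-2) * ((\<lambda>(u, v). complex_of_real ((a u - a v)^2)) ?B * (\<lambda>(u, v). complex_of_real ((a u - a v)^2)) ?C)"
      by (rule poly_eval_tri[OF _ _ d]) simp_all
    show ?thesis unfolding e using tri_real_zero[of a u v w]
      by (simp only: case_prod_conv sq_sym id_apply)
  qed
  ultimately show ?thesis unfolding CM_ideal_def by blast
qed

lemma tri_val: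
  fixes FA FB FC :: "complex fls"
  assumes nz: "FA \<noteq> 0" "FB \<noteq> 0" "FC \<noteq> 0"
  and eq: "fls_const 1 * FA ^ 2 + fls_const 1 * FB ^ 2 + fls_const 1 * FC ^ 2 + fls_const (-2) * (FA * FB)
    + fls_const (-2) * (FA * FC) + fls_const (-2) * (FB * FC) = 0"
  shows "min (fls_subdegree FB) (fls_subdegree FC) \<le> fls_subdegree FA"
proof (rule ccontr)
  assume "\<not> ?thesis"
  then have lt: "fls_subdegree FA < fls_subdegree FB" "fls_subdegree FA < fls_subdegree FC" by auto
  define n0 where "n0 = fls_subdegree FA + fls_subdegree FA"
  have "FA * FA \<noteq> 0" using nz by simp
  then have hA: "fls_nth (FA * FA) n0 \<noteq> 0"
    using nth_fls_subdegree_nonzero[of "FA * FA"] nz unfolding n0_def by simp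
  have z: "fls_nth (FB * FB) n0 = 0" "fls_nth (FC * FC) n0 = 0" "fls_nth (FA * FB) n0 = 0" "fls_nth (FA * FC) n0 = 0" "fls_nth (FB * FC) n0 = 0"
    using lt unfolding n0_def by (auto intro!: fls_times_nth_eq0)
  have "fls_nth (fls_const 1 * FA ^ 2 + fls_const 1 * FB ^ 2 + fls_const 1 * FC ^ 2 + fls_const (-2) * (FA * FB)
    + fls_const (-2) * (FA * FC) + fls_const (-2) * (FB * FC)) n0 = 0" using eq by simp
  then have "fls_nth (FA * FA) n0 = 0"
    unfolding fls_plus_nth fls_mult_const_nth power2_eq_square z by simp
  with hA show False by simp
qed

lemma closed_imp_const: "closed {x. Q x} \<Longrightarrow> closed {x. P \<longrightarrow> Q x}"
  by (cases P) auto

lemma closed_ultra: "closed (ultrametrics n)"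
proof -
  have eq: "ultrametrics n = (\<Inter>i\<in>-pairs n. {\<delta>. \<delta> i = 0}) \<inter>
     (\<Inter>u\<in>{1..n}. \<Inter>v\<in>{1..n}. \<Inter>w\<in>{1..n}. {\<delta>. u \<noteq> v \<and> u \<noteq> w \<and> v \<noteq> w \<longrightarrow>
        \<delta> (min u v, max u v) \<le> max (\<delta> (min u w, max u w)) (\<delta> (min v w, max v w))})"
    unfolding ultrametrics_def dsym_def by auto
  have c: "continuous_on UNIV (\<lambda>\<delta>::(nat\<times>nat)\<Rightarrow>real. \<delta> i)" for i by simp
  have c1: "closed {\<delta>::(nat\<times>nat)\<Rightarrow>real. \<delta> i = 0}" for i
    by (rule closed_Collect_eq[OF c continuous_on_const])
  have c2: "closed {\<delta>::(nat\<times>nat)\<Rightarrow>real. \<delta> a \<le> max (\<delta> b) (\<delta> c)}" for a b c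
    by (rule closed_Collect_le[OF c continuous_on_max[OF c c]])
  show ?thesis unfolding eq
    by (intro closed_Int closed_INT ballI closed_imp_const c1 c2)
qed

lemma div_max_aux:
  fixes N :: real and a b c :: int
  assumes "N > 0" "min b c \<le> a"
  shows "- (real_of_int a / N) \<le> max (- (real_of_int b / N)) (- (real_of_int c / N))"
proof -
  have "real_of_int b \<le> real_of_int a \<or> real_of_int c \<le> real_of_int a" using assms(2) by linarith
  then have "real_of_int b / N \<le> real_of_int a / N \<or> real_of_int c / N \<le> real_of_int a / N"
    using assms(1) divide_right_mono by (metis less_eq_real_def)
  then show ?thesis by linarith
qed

lemma val_points_ultra: "trop_val_points (pairs n) (CM_ideal n) \<subseteq> ultrametrics n"
proof
  fix \<delta> assume "\<delta> \<in> trop_val_points (pairs n) (CM_ideal n)"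
  then obtain N f where \<delta>: "\<delta> = (\<lambda>i. if i \<in> pairs n then - (real_of_int (fls_subdegree (f i)) / real N) else 0)"
    and N: "N \<ge> 1" and nz: "\<forall>i\<in>pairs n. f i \<noteq> (0 :: complex fls)"
    and van: "\<forall>p\<in>CM_ideal n. poly_eval fls_const p f = 0"
    unfolding trop_val_points_def by blast
  have "dsym \<delta> u v \<le> max (dsym \<delta> u w) (dsym \<delta> v w)"
    if uvw: "u \<in> {1..n}" "v \<in> {1..n}" "w \<in> {1..n}" "u \<noteq> v" "u \<noteq> w" "v \<noteq> w" for u v w
  proof -
    let ?A = "(min u v, max u v)" and ?B = "(min u w, max u w)" and ?C = "(min v w, max v w)"
    have d: "?A \<noteq> ?B" "?A \<noteq> ?C" "?B \<noteq> ?C" using uvw unfolding prod.inject min_def max_def by auto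
    have p: "?A \<in> pairs n" "?B \<in> pairs n" "?C \<in> pairs n" using uvw by (auto simp: pairs_def min_def max_def)
    have "poly_eval fls_const (tri ?A ?B ?C) f = 0" using van tri_in_CM[OF uvw] by blast
    then have "fls_const 1 * f ?A ^ 2 + fls_const 1 * f ?B ^ 2 + fls_const 1 * f ?C ^ 2 + fls_const (-2) * (f ?A * f ?B)
    + fls_const (-2) * (f ?A * f ?C) + fls_const (-2) * (f ?B * f ?C) = 0"
      by (subst (asm) poly_eval_tri[OF _ _ d]) (simp_all add: fls_plus_const)
    then have "min (fls_subdegree (f ?B)) (fls_subdegree (f ?C)) \<le> fls_subdegree (f ?A)"
      by (rule tri_val[rotated 3]) (use nz p in auto)
    then have "- (real_of_int (fls_subdegree (f ?A)) / real N) \<le> max (- (real_of_int (fls_subdegree (f ?B)) / real N)) (- (real_of_int (fls_subdegree (f ?C)) / real N))"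
      by (intro div_max_aux) (use N in auto)
    then show ?thesis unfolding dsym_def \<delta> using p by simp
  qed
  moreover have "\<forall>i. i \<notin> pairs n \<longrightarrow> \<delta> i = 0" unfolding \<delta> by simp
  ultimately show "\<delta> \<in> ultrametrics n" unfolding ultrametrics_def by blast
qed

lemma trop_subset: "trop (pairs n) (CM_ideal n) \<subseteq> ultrametrics n"
  unfolding trop_def by (rule closure_minimal[OF val_points_ultra closed_ultra])

lemma zero_on_reals:
  fixes h :: "complex poly"
  assumes "\<And>t::real. poly h (of_real t) = 0"
  shows "h = 0"
proof (rule ccontr)
  assume "h \<noteq> 0"
  then have "finite {x. poly h x = 0}" by (rule poly_roots_finite)
  moreover have "range (of_real :: real \<Rightarrow> complex) \<subseteq> {x. poly h x = 0}" using assms by auto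
  moreover have "infinite (range (of_real :: real \<Rightarrow> complex))"
  proof
    assume "finite (range (of_real :: real \<Rightarrow> complex))"
    then have "finite (UNIV :: real set)" by (rule finite_imageD) (auto simp: inj_on_def)
    then show False using infinite_UNIV_char_0 by blast
  qed
  ultimately show False using finite_subset by blast
qed

lemma coeff_poly_const:
  fixes G :: "'a::comm_ring_1 poly poly"
  shows "coeff (poly G [:c:]) k = poly (map_poly (\<lambda>r. coeff r k) G) c"
proof (induction G)
  case 0
  then show ?case by simp
next
  case (pCons a p)
  have "map_poly (\<lambda>r. coeff r k) (pCons a p) = pCons (coeff a k) (map_poly (\<lambda>r. coeff r k) p)"
    by (rule map_poly_pCons) simp
  then show ?case using pCons(2) by simp
qed

lemma zero_on_reals2:
  fixes G :: "complex poly poly"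
  assumes "\<And>t t'::real. poly (poly G [:of_real t':]) (of_real t) = 0"
  shows "G = 0"
proof -
  have h: "poly G [:of_real t':] = 0" for t' by (rule zero_on_reals) (rule assms)
  have m: "map_poly (\<lambda>r. coeff r k) G = 0" for k
  proof (rule zero_on_reals)
    fix t :: real
    have "poly (map_poly (\<lambda>r. coeff r k) G) (of_real t) = coeff (poly G [:of_real t:]) k"
      by (rule coeff_poly_const[symmetric])
    then show "poly (map_poly (\<lambda>r. coeff r k) G) (of_real t) = 0" by (simp add: h)
  qed
  have "coeff (coeff G j) k = 0" for j k
    using arg_cong[OF m[of k], of "\<lambda>p. coeff p j"] by (simp add: coeff_map_poly)
  then show ?thesis by (intro poly_eqI) (simp add: poly_eq_iff)
qed
lemma map_poly_add_hom:
  assumes "h 0 = 0" "\<And>a b. h (a + b) = h a + h b"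
  shows "map_poly h (p + q) = map_poly h p + map_poly h q"
  by (rule poly_eqI) (simp add: coeff_map_poly assms)

lemma map_poly_mult_hom:
  fixes h :: "'a::comm_semiring_1 \<Rightarrow> 'b::comm_semiring_1"
  assumes "h 0 = 0" "\<And>a b. h (a + b) = h a + h b" "\<And>a b. h (a * b) = h a * h b"
  shows "map_poly h (p * q) = map_poly h p * map_poly h q"
proof (rule poly_eqI)
  fix n
  have "coeff (map_poly h (p * q)) n = h (\<Sum>i\<le>n. coeff p i * coeff q (n - i))"
    by (simp add: coeff_map_poly assms(1) coeff_mult)
  also have "\<dots> = (\<Sum>i\<le>n. h (coeff p i) * h (coeff q (n - i)))"
    by (simp add: hom_sum[of h, OF assms(1,2)] assms(3))
  also have "\<dots> = coeff (map_poly h p * map_poly h q) n"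
    by (simp add: coeff_map_poly assms(1) coeff_mult)
  finally show "coeff (map_poly h (p * q)) n = coeff (map_poly h p * map_poly h q) n" .
qed

definition psi0 :: "complex poly \<Rightarrow> complex fls" where
  "psi0 r = fps_to_fls (fps_of_poly r)"

lemma psi0_hom: "psi0 0 = 0" "psi0 1 = 1" "psi0 (a + b) = psi0 a + psi0 b" "psi0 (a * b) = psi0 a * psi0 b"
  "psi0 (a - b) = psi0 a - psi0 b" "psi0 [:c:] = fls_const c"
  by (simp_all add: psi0_def fps_of_poly_add fps_of_poly_mult fls_times_fps_to_fls fps_of_poly_diff fps_of_poly_const)

definition Psi :: "nat \<Rightarrow> complex poly poly \<Rightarrow> complex fls" where
  "Psi K G = poly (map_poly psi0 G) (fls_X_inv ^ K)"

lemma Psi_hom: "Psi K 0 = 0" "Psi K 1 = 1" "Psi K (a + b) = Psi K a + Psi K b" "Psi K (a * b) = Psi K a * Psi K b"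
  by (simp_all add: Psi_def psi0_hom map_poly_add_hom[of psi0] map_poly_mult_hom[of psi0])

lemma Psi_vals: "Psi K [:[:c:]:] = fls_const c" "Psi K [:Q:] = psi0 Q" "Psi K [:0, 1:] = fls_X_inv ^ K"
  by (simp_all add: Psi_def map_poly_pCons psi0_hom)

lemma poly_map_of_real: "poly (map_poly of_real p) (of_real x) = (of_real (poly p x) :: complex)"
  by (induction p) (auto simp: map_poly_pCons)

definition low :: "real poly \<Rightarrow> nat \<Rightarrow> bool" where
  "low r k \<longleftrightarrow> coeff r k \<noteq> 0 \<and> (\<forall>i<k. coeff r i = 0)"

lemma low_swap: "low (a - b) k \<Longrightarrow> low (b - a) k"
  unfolding low_def by (metis coeff_diff diff_self minus_diff_eq coeff_minus neg_equal_0_iff_equal)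

lemma realize:
  fixes e :: "nat \<Rightarrow> nat \<Rightarrow> nat"
  assumes sym: "\<And>u v. e u v = e v u"
  and ult: "\<And>u v w. u \<in> {1..n} \<Longrightarrow> v \<in> {1..n} \<Longrightarrow> w \<in> {1..n} \<Longrightarrow> u \<noteq> v \<Longrightarrow> u \<noteq> w \<Longrightarrow> v \<noteq> w
     \<Longrightarrow> min (e u w) (e v w) \<le> e u v"
  shows "m \<le> n \<Longrightarrow> \<exists>q::nat \<Rightarrow> real poly. \<forall>u\<in>{1..m}. \<forall>v\<in>{1..m}. u \<noteq> v \<longrightarrow> low (q u - q v) (e u v)"
proof (induction m)
  case 0 show ?case by auto
next
  case (Suc m)
  then obtain q :: "nat \<Rightarrow> real poly" where q: "\<forall>u\<in>{1..m}. \<forall>v\<in>{1..m}. u \<noteq> v \<longrightarrow> low (q u - q v) (e u v)" by auto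
  show ?case
  proof (cases "m = 0")
    case True then show ?thesis by auto
  next
    case False
    let ?S = "{1..m}"
    define M where "M = Max ((\<lambda>u. e u (Suc m)) ` ?S)"
    have "M \<in> (\<lambda>u. e u (Suc m)) ` ?S" unfolding M_def using False by (intro Max_in) auto
    then obtain w0 where w0: "w0 \<in> ?S" "e w0 (Suc m) = M" by auto
    have wmax: "e u (Suc m) \<le> e w0 (Suc m)" if "u \<in> ?S" for u
      unfolding w0(2) M_def using that by (intro Max_ge) auto
    define e0 where "e0 = e w0 (Suc m)"
    define c where "c = 1 + (\<Sum>u\<in>?S. \<bar>coeff (q w0 - q u) e0\<bar>)"
    have cbig: "\<bar>coeff (q w0 - q u) e0\<bar> < c" if "u \<in> ?S" for u
    proof -
      have "\<bar>coeff (q w0 - q u) e0\<bar> \<le> (\<Sum>u\<in>?S. \<bar>coeff (q w0 - q u) e0\<bar>)"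
        by (rule member_le_sum) (use that in auto)
      then show ?thesis unfolding c_def by linarith
    qed
    have cpos: "c > 0" using cbig[OF w0(1)] by linarith
    define q' where "q' = q(Suc m := q w0 + monom c e0)"
    have new: "low (q' (Suc m) - q' u) (e u (Suc m))" if u: "u \<in> ?S" for u
    proof -
      have cf: "coeff (q' (Suc m) - q' u) i = coeff (q w0 - q u) i + (if i = e0 then c else 0)" for i
        using u by (simp add: q'_def coeff_monom)
      have le: "e u (Suc m) \<le> e0" using wmax[OF u] e0_def by simp
      show ?thesis
      proof (cases "u = w0")
        case True
        then show ?thesis unfolding low_def cf using cpos e0_def by auto
      next
        case False
        have lq: "low (q w0 - q u) (e w0 u)" using q w0 u False by auto
        have n: "Suc m \<le> n" using Suc.prems .
        have ultA: "min (e u w0) (e (Suc m) w0) \<le> e u (Suc m)"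
          by (rule ult) (use u w0 n False in auto)
        have ultB: "min (e w0 (Suc m)) (e u (Suc m)) \<le> e w0 u"
          by (rule ult) (use u w0 n False in auto)
        show ?thesis
        proof (cases "e u (Suc m) < e0")
          case True
          then have ab: "e w0 u = e u (Suc m)" using ultA ultB sym e0_def by (simp add: min_def split: if_splits)
          show ?thesis unfolding low_def cf using lq True ab unfolding low_def by auto
        next
          case False
          then have b: "e u (Suc m) = e0" using le by simp
          then have a: "e0 \<le> e w0 u" using ultB e0_def by simp
          have "coeff (q w0 - q u) e0 + c \<noteq> 0" using cbig[OF u] by linarith
          then show ?thesis unfolding low_def cf b using lq a unfolding low_def by auto
        qed
      qed
    qed
    show ?thesis
    proof (intro exI[of _ q'] ballI impI)
      fix u v assume uv: "u \<in> {1..Suc m}" "v \<in> {1..Suc m}" "u \<noteq> v"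
      show "low (q' u - q' v) (e u v)"
      proof (cases "u = Suc m")
        case True
        then have "v \<in> ?S" using uv by auto
        then show ?thesis using new[of v] True sym by simp
      next
        case False
        then have uS: "u \<in> ?S" using uv by auto
        show ?thesis
        proof (cases "v = Suc m")
          case True
          then show ?thesis using low_swap[OF new[OF uS]] by simp
        next
          case False
          then have "v \<in> ?S" using uv by auto
          then show ?thesis using q uS uv(3) \<open>u \<noteq> Suc m\<close> False by (simp add: q'_def)
        qed
      qed
    qed
  qed
qed

lemma Psi_diff: "Psi K (a - b) = Psi K a - Psi K b"
  using Psi_hom(3)[of K "a - b" b] by (simp add: eq_diff_eq)

lemma Psi_power: "Psi K (a ^ j) = Psi K a ^ j"
  by (rule hom_power) (simp_all add: Psi_hom)

lemma finite_pairs: "finite (pairs n)"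
  by (rule finite_subset[of _ "{1..n} \<times> {1..n}"]) (auto simp: pairs_def)

lemma nat_ult_aux:
  fixes x y z K :: int
  assumes "x \<le> max y z"
  shows "min (nat (K - y)) (nat (K - z)) \<le> nat (K - x)"
proof (cases "y \<le> z")
  case True
  then have "nat (K - z) \<le> nat (K - x)" using assms by (intro nat_mono) simp
  then show ?thesis by (rule min.coboundedI2)
next
  case False
  then have "nat (K - y) \<le> nat (K - x)" using assms by (intro nat_mono) simp
  then show ?thesis by (rule min.coboundedI1)
qed

lemma val_point:
  fixes D :: "nat \<times> nat \<Rightarrow> int" and k :: nat
  assumes k: "k \<ge> 1"
  and ultD: "\<And>u v w. u \<in> {1..n} \<Longrightarrow> v \<in> {1..n} \<Longrightarrow> w \<in> {1..n} \<Longrightarrow> u \<noteq> v \<Longrightarrow> u \<noteq> w \<Longrightarrow> v \<noteq> w \<Longrightarrow>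
     D (min u v, max u v) \<le> max (D (min u w, max u w)) (D (min v w, max v w))"
  shows "(\<lambda>i. if i \<in> pairs n then real_of_int (D i) / real k else 0) \<in> trop_val_points (pairs n) (CM_ideal n)"
proof -
  define K :: nat where "K = nat (\<Sum>i\<in>pairs n. \<bar>D i\<bar>)"
  have DK: "D i \<le> int K" if "i \<in> pairs n" for i
  proof -
    have "\<bar>D i\<bar> \<le> (\<Sum>i\<in>pairs n. \<bar>D i\<bar>)" by (rule member_le_sum) (use that finite_pairs in auto)
    then show ?thesis unfolding K_def by linarith
  qed
  define e where "e u v = nat (int K - D (min u v, max u v))" for u v
  have esym: "e u v = e v u" for u v unfolding e_def by (simp add: min.commute max.commute)
  have eult: "min (e u w) (e v w) \<le> e u v"
    if "u \<in> {1..n}" "v \<in> {1..n}" "w \<in> {1..n}" "u \<noteq> v" "u \<noteq> w" "v \<noteq> w" for u v w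
  proof -
    have h: "D (min u v, max u v) \<le> max (D (min u w, max u w)) (D (min v w, max v w))" by (rule ultD) (use that in auto)
    show ?thesis unfolding e_def by (rule nat_ult_aux[OF h])
  qed
  obtain q :: "nat \<Rightarrow> real poly" where q: "\<forall>u\<in>{1..n}. \<forall>v\<in>{1..n}. u \<noteq> v \<longrightarrow> low (q u - q v) (e u v)"
    using realize[of e n n, OF esym eult] by auto
  define Qc where "Qc u = map_poly complex_of_real (q u)" for u
  define P where "P = (\<lambda>(u, v). ([:0, 1:] * ([:Qc u:] - [:Qc v:])) ^ 2 :: complex poly poly)"
  define f where "f = (\<lambda>i. Psi K (P i))"
  define N where "N = 2 * k"
  have fuv: "f (u, v) = (fls_X_inv ^ K * psi0 (Qc u - Qc v)) ^ 2" for u v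
    unfolding f_def P_def by (simp only: case_prod_conv Psi_power Psi_hom(4) Psi_diff Psi_vals psi0_hom(5))
  have sub: "f i \<noteq> 0 \<and> fls_subdegree (f i) = - 2 * D i" if i: "i \<in> pairs n" for i
  proof -
    obtain u v where uv: "i = (u, v)" "u \<in> {1..n}" "v \<in> {1..n}" "u < v" using i by (auto simp: pairs_def)
    have l: "low (q u - q v) (e u v)" using q uv by auto
    have ee: "int (e u v) = int K - D i" unfolding e_def using DK[OF i] uv by simp
    have cf: "coeff (Qc u - Qc v) j = of_real (coeff (q u - q v) j)" for j
      by (simp add: Qc_def coeff_map_poly)
    have sd: "subdegree (fps_of_poly (Qc u - Qc v)) = e u v"
    proof (rule subdegreeI)
      show "fps_nth (fps_of_poly (Qc u - Qc v)) (e u v) \<noteq> 0"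
        using l unfolding low_def fps_of_poly_nth cf by simp
      show "fps_nth (fps_of_poly (Qc u - Qc v)) i = 0" if "i < e u v" for i
        using l that unfolding low_def fps_of_poly_nth cf by simp
    qed
    have nz: "fps_of_poly (Qc u - Qc v) \<noteq> 0"
    proof
      assume "fps_of_poly (Qc u - Qc v) = 0"
      then have "fps_nth (fps_of_poly (Qc u - Qc v)) (e u v) = 0" by simp
      then show False using l unfolding low_def fps_of_poly_nth cf by simp
    qed
    define g where "g = psi0 (Qc u - Qc v)"
    have gnz: "g \<noteq> 0" and gsd: "fls_subdegree g = int (e u v)"
      using nz sd by (simp_all add: g_def psi0_def fls_subdegree_fls_to_fps)
    have hnz: "fls_X_inv ^ K * g \<noteq> 0" using gnz by simp
    have hsd: "fls_subdegree (fls_X_inv ^ K * g) = - int K + int (e u v)"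
      using gnz gsd by simp
    show ?thesis unfolding uv(1) fuv g_def[symmetric] using hnz hsd ee uv(1)
      by (simp add: fls_subdegree_pow)
  qed
  have vals: "(\<lambda>i. if i \<in> pairs n then real_of_int (D i) / real k else 0) =
     (\<lambda>i. if i \<in> pairs n then - (real_of_int (fls_subdegree (f i)) / real N) else 0)"
  proof
    fix i show "(if i \<in> pairs n then real_of_int (D i) / real k else 0) =
     (if i \<in> pairs n then - (real_of_int (fls_subdegree (f i)) / real N) else 0)"
      using sub[of i] k by (auto simp: N_def)
  qed
  have van: "poly_eval fls_const p f = 0" if p: "p \<in> CM_ideal n" for p
  proof -
    let ?C = "\<lambda>c. [:[:c:]:] :: complex poly poly"
    have G0: "poly_eval ?C p P = 0"
    proof (rule zero_on_reals2)
      fix t t' :: real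
      define \<phi> where "\<phi> G = poly (poly G [:of_real t':]) (of_real t)" for G :: "complex poly poly"
      define a where "a u = t' * poly (q u) t" for u
      have "\<phi> (poly_eval ?C p P) = poly_eval (\<phi> \<circ> ?C) p (\<phi> \<circ> P)"
        by (rule poly_eval_hom) (simp_all add: \<phi>_def)
      also have "\<phi> \<circ> ?C = id" by (simp add: \<phi>_def fun_eq_iff)
      also have "\<phi> \<circ> P = (\<lambda>(u, v). complex_of_real ((a u - a v)^2))"
        by (auto simp: fun_eq_iff \<phi>_def P_def a_def Qc_def poly_map_of_real algebra_simps)
      also have "poly_eval id p (\<lambda>(u, v). complex_of_real ((a u - a v)^2)) = 0"
        using p unfolding CM_ideal_def by blast
      finally show "poly (poly (poly_eval ?C p P) [:of_real t':]) (of_real t) = 0" unfolding \<phi>_def .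
    qed
    have e1: "fls_const = Psi K \<circ> ?C" by (simp add: fun_eq_iff Psi_vals psi0_hom)
    have e2: "f = Psi K \<circ> P" by (simp add: fun_eq_iff f_def)
    have "poly_eval fls_const p f = Psi K (poly_eval ?C p P)"
      unfolding e1 e2 by (rule poly_eval_hom[symmetric]) (simp_all add: Psi_hom)
    then show ?thesis by (simp add: G0 Psi_hom)
  qed
  show ?thesis unfolding trop_val_points_def
    using vals sub van k by (auto simp: N_def intro!: exI[of _ N] exI[of _ f])
qed

lemma tendsto_fun_componentwise:
  fixes f :: "'x \<Rightarrow> 'a \<Rightarrow> 'b::topological_space"
  assumes "\<And>i. ((\<lambda>c. f c i) \<longlongrightarrow> l i) F"
  shows "(f \<longlongrightarrow> l) F"
proof -
  have "limitin (product_topology (\<lambda>i. euclidean) UNIV) f l F"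
    using assms by (simp add: limitin_componentwise)
  then show ?thesis by (simp add: euclidean_product_topology)
qed

lemma floor_lim: "(\<lambda>j. real_of_int \<lfloor>real (Suc j) * x\<rfloor> / real (Suc j)) \<longlonglongrightarrow> x"
proof (rule tendsto_sandwich[of "\<lambda>j. x - inverse (real (Suc j))" _ sequentially "\<lambda>j. x"])
  show "\<forall>\<^sub>F j in sequentially. x - inverse (real (Suc j)) \<le> real_of_int \<lfloor>real (Suc j) * x\<rfloor> / real (Suc j)"
  proof (rule always_eventually, rule allI)
    fix j
    have s: "real (Suc j) > 0" by simp
    have "real (Suc j) * x - 1 \<le> real_of_int \<lfloor>real (Suc j) * x\<rfloor>" by linarith
    then have "(real (Suc j) * x - 1) / real (Suc j) \<le> real_of_int \<lfloor>real (Suc j) * x\<rfloor> / real (Suc j)"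
      using s by (intro divide_right_mono) auto
    moreover have "(real (Suc j) * x - 1) / real (Suc j) = x - inverse (real (Suc j))"
      using s by (simp add: field_simps)
    ultimately show "x - inverse (real (Suc j)) \<le> real_of_int \<lfloor>real (Suc j) * x\<rfloor> / real (Suc j)" by simp
  qed
  show "\<forall>\<^sub>F j in sequentially. real_of_int \<lfloor>real (Suc j) * x\<rfloor> / real (Suc j) \<le> x"
  proof (rule always_eventually, rule allI)
    fix j
    have s: "real (Suc j) > 0" by simp
    have "real_of_int \<lfloor>real (Suc j) * x\<rfloor> \<le> real (Suc j) * x" by linarith
    then show "real_of_int \<lfloor>real (Suc j) * x\<rfloor> / real (Suc j) \<le> x"
      using s by (simp add: divide_le_eq mult.commute)
  qed
  show "(\<lambda>j. x - inverse (real (Suc j))) \<longlonglongrightarrow> x"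
    using tendsto_diff[OF tendsto_const LIMSEQ_inverse_real_of_nat, of x] by simp
  show "(\<lambda>j. x) \<longlonglongrightarrow> x" by simp
qed

lemma floor_max_aux:
  fixes a b c s :: real
  assumes "a \<le> max b c" "s > 0"
  shows "\<lfloor>s * a\<rfloor> \<le> max \<lfloor>s * b\<rfloor> \<lfloor>s * c\<rfloor>"
proof (cases "b \<le> c")
  case True
  then have "s * a \<le> s * c" using assms by (simp add: max_def)
  then have "\<lfloor>s * a\<rfloor> \<le> \<lfloor>s * c\<rfloor>" by (rule floor_mono)
  then show ?thesis by simp
next
  case False
  then have "s * a \<le> s * b" using assms by (simp add: max_def)
  then have "\<lfloor>s * a\<rfloor> \<le> \<lfloor>s * b\<rfloor>" by (rule floor_mono)
  then show ?thesis by simp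
qed

lemma ultra_sub_trop: "ultrametrics n \<subseteq> trop (pairs n) (CM_ideal n)"
proof
  fix \<delta> assume d: "\<delta> \<in> ultrametrics n"
  define g where "g j = (\<lambda>i. if i \<in> pairs n then real_of_int (\<lfloor>real (Suc j) * \<delta> i\<rfloor>) / real (Suc j) else 0)" for j
  have gin: "g j \<in> trop_val_points (pairs n) (CM_ideal n)" for j
    unfolding g_def
  proof (rule val_point)
    fix u v w assume uvw: "u \<in> {1..n}" "v \<in> {1..n}" "w \<in> {1..n}" "u \<noteq> v" "u \<noteq> w" "v \<noteq> w"
    have "\<delta> (min u v, max u v) \<le> max (\<delta> (min u w, max u w)) (\<delta> (min v w, max v w))"
      using d uvw unfolding ultrametrics_def dsym_def by blast
    then show "\<lfloor>real (Suc j) * \<delta> (min u v, max u v)\<rfloor> \<le> max \<lfloor>real (Suc j) * \<delta> (min u w, max u w)\<rfloor> \<lfloor>real (Suc j) * \<delta> (min v w, max v w)\<rfloor>"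
      by (rule floor_max_aux) simp
  qed simp
  have "g \<longlonglongrightarrow> \<delta>"
  proof (rule tendsto_fun_componentwise)
    fix i
    show "(\<lambda>j. g j i) \<longlonglongrightarrow> \<delta> i"
    proof (cases "i \<in> pairs n")
      case True
      then show ?thesis unfolding g_def using floor_lim[of "\<delta> i"] by simp
    next
      case False
      then have "\<delta> i = 0" using d unfolding ultrametrics_def by blast
      then show ?thesis unfolding g_def using False by simp
    qed
  qed
  then show "\<delta> \<in> trop (pairs n) (CM_ideal n)"
    unfolding trop_def closure_sequential using gin by blast
qed

theorem proposition2p1:
  fixes n :: nat
  assumes "n \<ge> 2"
  shows "trop (pairs n) (CM_ideal n) = ultrametrics n"
  using trop_subset ultra_sub_trop by (rule antisym)

end
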